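(* Let $L_0$ be a countable complete lattice whose Scott space $\Sigma L_0$ is not sober. Then neither $\Sigma\Gamma(L_0)$ nor $\Sigma\mathcal Q(L_0)$ is sober.
   Context: For a complete lattice $L$, $\Sigma L$ is $L$ with the Scott topology (a set $U$ is Scott open iff it is an upper set and for every directed $D$, $\bigvee D\in U$ implies $D\cap U\neq\emptyset$). $\Gamma(L)$ is the lattice of closed subsets of $\Sigma L$ ordered by inclusion, and $\mathcal Q(L)$ is the poset of nonempty compact saturated subsets of $\Sigma L$ (saturated = upper set) ordered by reverse inclusion; $\Sigma\Gamma(L)$ and $\Sigma\mathcal Q(L)$ denote these posets with their Scott topologies. A $T_0$ space is sober if every irreducible closed set equals $\overline{\{x\}}$ for some point $x$. (Such a countable complete lattice $L_0$ exists.) *)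

theory Defs
  imports "HOL-Analysis.Analysis"
begin

definition directed_in :: "'a set \<Rightarrow> ('a \<Rightarrow> 'a \<Rightarrow> bool) \<Rightarrow> 'a set \<Rightarrow> bool" where
  "directed_in P le D \<longleftrightarrow> D \<subseteq> P \<and> D \<noteq> {} \<and>
     (\<forall>x\<in>D. \<forall>y\<in>D. \<exists>z\<in>D. le x z \<and> le y z)"

definition is_lub_in :: "'a set \<Rightarrow> ('a \<Rightarrow> 'a \<Rightarrow> bool) \<Rightarrow> 'a set \<Rightarrow> 'a \<Rightarrow> bool" where
  "is_lub_in P le D s \<longleftrightarrow> s \<in> P \<and> (\<forall>d\<in>D. le d s) \<and>
     (\<forall>u\<in>P. (\<forall>d\<in>D. le d u) \<longrightarrow> le s u)"

definition scott_open :: "'a set \<Rightarrow> ('a \<Rightarrow> 'a \<Rightarrow> bool) \<Rightarrow> 'a set \<Rightarrow> bool" where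
  "scott_open P le U \<longleftrightarrow> U \<subseteq> P \<and>
     (\<forall>x\<in>U. \<forall>y\<in>P. le x y \<longrightarrow> y \<in> U) \<and>
     (\<forall>D s. directed_in P le D \<longrightarrow> is_lub_in P le D s \<longrightarrow> s \<in> U \<longrightarrow> D \<inter> U \<noteq> {})"

definition scott_topology :: "'a set \<Rightarrow> ('a \<Rightarrow> 'a \<Rightarrow> bool) \<Rightarrow> 'a topology" where
  "scott_topology P le = topology (scott_open P le)"

definition Sigma_L :: "'a::complete_lattice topology" where
  "Sigma_L = scott_topology UNIV (\<le>)"

definition Gamma_L :: "'a::complete_lattice set set" where
  "Gamma_L = {C. closedin Sigma_L C}"

text \<open>Q(L): nonempty compact saturated (= upper) subsets of Sigma L, ordered by reverse inclusion.\<close>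
definition Q_L :: "'a::complete_lattice set set" where
  "Q_L = {K. K \<noteq> {} \<and> compactin Sigma_L K \<and> (\<forall>x\<in>K. \<forall>y. x \<le> y \<longrightarrow> y \<in> K)}"

definition Sigma_Gamma :: "'a::complete_lattice set topology" where
  "Sigma_Gamma = scott_topology Gamma_L (\<subseteq>)"

definition Sigma_Q :: "'a::complete_lattice set topology" where
  "Sigma_Q = scott_topology Q_L (\<lambda>A B. B \<subseteq> A)"

definition irreducible_in :: "'a topology \<Rightarrow> 'a set \<Rightarrow> bool" where
  "irreducible_in X A \<longleftrightarrow> A \<noteq> {} \<and> A \<subseteq> topspace X \<and>
     (\<forall>B C. closedin X B \<longrightarrow> closedin X C \<longrightarrow> A \<subseteq> B \<union> C \<longrightarrow> A \<subseteq> B \<or> A \<subseteq> C)"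

definition sober_space :: "'a topology \<Rightarrow> bool" where
  "sober_space X \<longleftrightarrow> t0_space X \<and>
     (\<forall>A. closedin X A \<and> irreducible_in X A \<longrightarrow> (\<exists>x\<in>topspace X. A = X closure_of {x}))"

end

theory Submission
  imports Defs
begin

lemma scott_istopology: "istopology (scott_open P le)"
  unfolding istopology_def
proof (intro conjI allI impI)
  fix S T assume S: "scott_open P le S" and T: "scott_open P le T"
  show "scott_open P le (S \<inter> T)"
    unfolding scott_open_def
  proof (intro conjI allI impI ballI)
    show "S \<inter> T \<subseteq> P" using S unfolding scott_open_def by blast
  next
    fix x y assume "x \<in> S \<inter> T" "y \<in> P" "le x y"
    then show "y \<in> S \<inter> T" using S T unfolding scott_open_def by blast
  next
    fix D s assume d: "directed_in P le D" and l: "is_lub_in P le D s" and s: "s \<in> S \<inter> T"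
    obtain d1 where d1: "d1 \<in> D" "d1 \<in> S" using S d l s unfolding scott_open_def by blast
    obtain d2 where d2: "d2 \<in> D" "d2 \<in> T" using T d l s unfolding scott_open_def by blast
    obtain z where z: "z \<in> D" "le d1 z" "le d2 z" using d d1 d2 unfolding directed_in_def by blast
    have "z \<in> P" using d z unfolding directed_in_def by blast
    then have "z \<in> S \<inter> T" using S T z d1 d2 unfolding scott_open_def by blast
    then show "D \<inter> (S \<inter> T) \<noteq> {}" using z by blast
  qed
next
  fix K assume K: "\<forall>S\<in>K. scott_open P le S"
  show "scott_open P le (\<Union>K)"
    unfolding scott_open_def
  proof (intro conjI allI impI ballI)
    show "\<Union>K \<subseteq> P" using K unfolding scott_open_def by blast
  next
    fix x y assume "x \<in> \<Union>K" "y \<in> P" "le x y"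
    then show "y \<in> \<Union>K" using K unfolding scott_open_def by blast
  next
    fix D s assume d: "directed_in P le D" and l: "is_lub_in P le D s" and s: "s \<in> \<Union>K"
    then obtain S where "S \<in> K" "s \<in> S" by blast
    then have "scott_open P le S" "s \<in> S" using K by auto
    then have "D \<inter> S \<noteq> {}" using d l unfolding scott_open_def by blast
    then show "D \<inter> \<Union>K \<noteq> {}" using \<open>S \<in> K\<close> by blast
  qed
qed

lemma openin_scott: "openin (scott_topology P le) U \<longleftrightarrow> scott_open P le U"
  by (simp add: scott_topology_def scott_istopology)

lemma topspace_scott: "topspace (scott_topology P le) = P"
proof -
  have "scott_open P le P" unfolding scott_open_def directed_in_def by blast
  moreover have "\<And>S. scott_open P le S \<Longrightarrow> S \<subseteq> P" unfolding scott_open_def by blast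
  ultimately show ?thesis unfolding topspace_def openin_scott by blast
qed

lemma closedin_scott: "closedin (scott_topology P le) C \<longleftrightarrow> C \<subseteq> P \<and> scott_open P le (P - C)"
  by (simp add: closedin_def topspace_scott openin_scott)

lemma closedin_scott_lower:
  assumes "closedin (scott_topology P le) C" "x \<in> C" "y \<in> P" "le y x"
  shows "y \<in> C"
  using assms unfolding closedin_scott scott_open_def by blast

lemma closedin_scott_dir:
  assumes "closedin (scott_topology P le) C" "directed_in P le D" "is_lub_in P le D s" "D \<subseteq> C"
  shows "s \<in> C"
  using assms unfolding closedin_scott scott_open_def is_lub_in_def by blast

lemma down_closed:
  assumes trans: "\<And>a b c. a \<in> P \<Longrightarrow> b \<in> P \<Longrightarrow> c \<in> P \<Longrightarrow> le a b \<Longrightarrow> le b c \<Longrightarrow> le a c"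
    and "x \<in> P"
  shows "closedin (scott_topology P le) {y \<in> P. le y x}"
  unfolding closedin_scott scott_open_def
proof (intro conjI allI impI ballI)
  fix a b assume "a \<in> P - {y \<in> P. le y x}" "b \<in> P" "le a b"
  then show "b \<in> P - {y \<in> P. le y x}" using trans assms(2) by blast
next
  fix D s assume d: "directed_in P le D" and l: "is_lub_in P le D s" and s: "s \<in> P - {y \<in> P. le y x}"
  show "D \<inter> (P - {y \<in> P. le y x}) \<noteq> {}"
  proof
    assume "D \<inter> (P - {y \<in> P. le y x}) = {}"
    then have "\<forall>d\<in>D. le d x" using d unfolding directed_in_def by blast
    then have "le s x" using l assms(2) unfolding is_lub_in_def by blast
    then show False using s by blast
  qed
qed auto

lemma closure_point_scott:
  assumes trans: "\<And>a b c. a \<in> P \<Longrightarrow> b \<in> P \<Longrightarrow> c \<in> P \<Longrightarrow> le a b \<Longrightarrow> le b c \<Longrightarrow> le a c"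
    and refl: "\<And>a. a \<in> P \<Longrightarrow> le a a"
    and "x \<in> P"
  shows "(scott_topology P le) closure_of {x} = {y \<in> P. le y x}"
proof
  show "scott_topology P le closure_of {x} \<subseteq> {y \<in> P. le y x}"
    by (rule closure_of_minimal) (use down_closed[OF trans assms(3)] refl assms(3) in auto)
next
  have cx: "closedin (scott_topology P le) (scott_topology P le closure_of {x})" by simp
  have xin: "x \<in> scott_topology P le closure_of {x}"
  proof -
    have "{x} \<subseteq> topspace (scott_topology P le)" using assms(3) by (simp add: topspace_scott)
    from closure_of_subset[OF this] show ?thesis by simp
  qed
  show "{y \<in> P. le y x} \<subseteq> scott_topology P le closure_of {x}"
    using closedin_scott_lower[OF cx xin] by blast
qed

lemma scott_cont:
  assumes map: "\<And>x. x \<in> P1 \<Longrightarrow> f x \<in> P2"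
    and mono: "\<And>x y. x \<in> P1 \<Longrightarrow> y \<in> P1 \<Longrightarrow> le1 x y \<Longrightarrow> le2 (f x) (f y)"
    and lub: "\<And>D s. directed_in P1 le1 D \<Longrightarrow> is_lub_in P1 le1 D s \<Longrightarrow> is_lub_in P2 le2 (f ` D) (f s)"
  shows "continuous_map (scott_topology P1 le1) (scott_topology P2 le2) f"
  unfolding continuous_map topspace_scott openin_scott
proof (intro conjI allI impI)
  show "f ` P1 \<subseteq> P2" using map by blast
next
  fix U assume U: "scott_open P2 le2 U"
  have U1: "U \<subseteq> P2" using U unfolding scott_open_def by blast
  have U2: "\<And>x y. x \<in> U \<Longrightarrow> y \<in> P2 \<Longrightarrow> le2 x y \<Longrightarrow> y \<in> U" using U unfolding scott_open_def by blast
  have U3: "\<And>D s. directed_in P2 le2 D \<Longrightarrow> is_lub_in P2 le2 D s \<Longrightarrow> s \<in> U \<Longrightarrow> D \<inter> U \<noteq> {}"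
    using U unfolding scott_open_def by blast
  show "scott_open P1 le1 {x \<in> P1. f x \<in> U}"
    unfolding scott_open_def
  proof (intro conjI allI impI ballI)
    show "{x \<in> P1. f x \<in> U} \<subseteq> P1" by blast
  next
    fix x y assume xy: "x \<in> {x \<in> P1. f x \<in> U}" "y \<in> P1" "le1 x y"
    then have "le2 (f x) (f y)" using mono by blast
    then show "y \<in> {x \<in> P1. f x \<in> U}" using U2[of "f x" "f y"] xy map by blast
  next
    fix D s assume d: "directed_in P1 le1 D" and l: "is_lub_in P1 le1 D s" and s: "s \<in> {x \<in> P1. f x \<in> U}"
    have DP: "D \<subseteq> P1" "D \<noteq> {}" "\<forall>x\<in>D. \<forall>y\<in>D. \<exists>z\<in>D. le1 x z \<and> le1 y z"
      using d unfolding directed_in_def by auto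
    have "directed_in P2 le2 (f ` D)"
      unfolding directed_in_def
    proof (intro conjI ballI)
      show "f ` D \<subseteq> P2" using DP map by blast
      show "f ` D \<noteq> {}" using DP by blast
    next
      fix u v assume "u \<in> f ` D" "v \<in> f ` D"
      then obtain x y where xy: "x \<in> D" "y \<in> D" "u = f x" "v = f y" by blast
      then obtain z where z: "z \<in> D" "le1 x z" "le1 y z" using DP by blast
      then show "\<exists>w\<in>f ` D. le2 u w \<and> le2 v w" using xy mono DP(1)
        by (intro bexI[of _ "f z"]) auto
    qed
    then have "f ` D \<inter> U \<noteq> {}" using U3 lub[OF d l] s by blast
    then show "D \<inter> {x \<in> P1. f x \<in> U} \<noteq> {}" using DP by blast
  qed
qed

lemma openin_SL: "openin (Sigma_L::'a::complete_lattice topology) U \<longleftrightarrow> scott_open UNIV (\<le>) U"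
  by (simp add: Sigma_L_def openin_scott)

lemma topspace_SL: "topspace (Sigma_L::'a::complete_lattice topology) = UNIV"
  by (simp add: Sigma_L_def topspace_scott)

lemma closedin_SL: "closedin (Sigma_L::'a::complete_lattice topology) C \<longleftrightarrow> scott_open UNIV (\<le>) (- C)"
  by (simp add: Sigma_L_def closedin_scott Compl_eq_Diff_UNIV)

lemma lub_UNIV: "is_lub_in UNIV (\<le>) D (s::'a::complete_lattice) \<longleftrightarrow> s = Sup D"
  unfolding is_lub_in_def by (auto intro: Sup_upper Sup_least antisym)

lemma dir_UNIV: "directed_in UNIV (\<le>) D \<longleftrightarrow> D \<noteq> {} \<and> (\<forall>x\<in>D. \<forall>y\<in>D. \<exists>z\<in>D. x \<le> z \<and> y \<le> z)"
  unfolding directed_in_def by auto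

lemma SL_closed_lower:
  assumes "closedin (Sigma_L::'a::complete_lattice topology) C" "x \<in> C" "y \<le> x"
  shows "y \<in> C"
  using closedin_scott_lower[of UNIV "(\<le>)" C x y] assms by (simp add: Sigma_L_def)

lemma SL_closed_dir:
  assumes "closedin (Sigma_L::'a::complete_lattice topology) C" "directed_in UNIV (\<le>) D" "D \<subseteq> C"
  shows "Sup D \<in> C"
  using closedin_scott_dir[of UNIV "(\<le>)" C D "Sup D"] assms by (simp add: Sigma_L_def lub_UNIV)

lemma SL_down_closed: "closedin (Sigma_L::'a::complete_lattice topology) {y. y \<le> x}"
  using down_closed[of UNIV "(\<le>)" x] by (simp add: Sigma_L_def)

lemma SL_closure_point: "(Sigma_L::'a::complete_lattice topology) closure_of {x} = {y. y \<le> x}"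
  using closure_point_scott[of UNIV "(\<le>)" x] by (simp add: Sigma_L_def)

lemma SL_t0: "t0_space (Sigma_L::'a::complete_lattice topology)"
  unfolding t0_space_def
proof (intro ballI impI)
  fix x y :: 'a assume "x \<noteq> y"
  then have "\<not> x \<le> y \<or> \<not> y \<le> x" by (auto intro: antisym)
  then show "\<exists>U. openin Sigma_L U \<and> (x \<notin> U) = (y \<in> U)"
  proof
    assume h: "\<not> x \<le> y"
    have "openin Sigma_L (- {z. z \<le> y})" using SL_down_closed[of y]
      by (simp add: closedin_def topspace_SL Compl_eq_Diff_UNIV)
    then show ?thesis using h by (intro exI[of _ "- {z. z \<le> y}"]) auto
  next
    assume h: "\<not> y \<le> x"
    have "openin Sigma_L (- {z. z \<le> x})" using SL_down_closed[of x]
      by (simp add: closedin_def topspace_SL Compl_eq_Diff_UNIV)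
    then show ?thesis using h by (intro exI[of _ "- {z. z \<le> x}"]) auto
  qed
qed

lemma irreducible_closure_image:
  assumes f: "continuous_map X Y f" and A: "irreducible_in X A"
  shows "irreducible_in Y (Y closure_of (f ` A))"
proof -
  have Ane: "A \<noteq> {}" and AX: "A \<subseteq> topspace X"
    and irr: "\<And>B C. closedin X B \<Longrightarrow> closedin X C \<Longrightarrow> A \<subseteq> B \<union> C \<Longrightarrow> A \<subseteq> B \<or> A \<subseteq> C"
    using A unfolding irreducible_in_def by blast+
  have fA: "f ` A \<subseteq> topspace Y" using f AX unfolding continuous_map by blast
  have sub1: "f ` A \<subseteq> Y closure_of f ` A" by (rule closure_of_subset[OF fA])
  show ?thesis
    unfolding irreducible_in_def
  proof (intro conjI allI impI)
    show "Y closure_of f ` A \<noteq> {}" using sub1 Ane by blast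
    show "Y closure_of f ` A \<subseteq> topspace Y" by (rule closure_of_subset_topspace)
  next
    fix B C assume B: "closedin Y B" and C: "closedin Y C" and sub: "Y closure_of f ` A \<subseteq> B \<union> C"
    have "A \<subseteq> {x \<in> topspace X. f x \<in> B} \<union> {x \<in> topspace X. f x \<in> C}"
      using sub sub1 AX by blast
    then have "A \<subseteq> {x \<in> topspace X. f x \<in> B} \<or> A \<subseteq> {x \<in> topspace X. f x \<in> C}"
      by (rule irr[OF closedin_continuous_map_preimage[OF f B] closedin_continuous_map_preimage[OF f C]])
    then show "Y closure_of f ` A \<subseteq> B \<or> Y closure_of f ` A \<subseteq> C"
    proof
      assume "A \<subseteq> {x \<in> topspace X. f x \<in> B}"
      then have "f ` A \<subseteq> B" by blast
      then show ?thesis using closure_of_minimal[OF _ B] by blast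
    next
      assume "A \<subseteq> {x \<in> topspace X. f x \<in> C}"
      then have "f ` A \<subseteq> C" by blast
      then show ?thesis using closure_of_minimal[OF _ C] by blast
    qed
  qed
qed

lemma retract_sober:
  assumes s: "continuous_map X Y s" and r: "continuous_map Y X r"
    and rs: "\<And>x. x \<in> topspace X \<Longrightarrow> r (s x) = x"
    and sob: "sober_space Y" and t0: "t0_space X"
  shows "sober_space X"
  unfolding sober_space_def
proof (intro conjI allI impI t0)
  fix A assume A: "closedin X A \<and> irreducible_in X A"
  let ?B = "Y closure_of (s ` A)"
  have "irreducible_in Y ?B" using irreducible_closure_image[OF s] A by blast
  moreover have "closedin Y ?B" by simp
  ultimately obtain y where y: "y \<in> topspace Y" "?B = Y closure_of {y}"
    using sob unfolding sober_space_def by blast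
  have AX: "A \<subseteq> topspace X" using A closedin_subset by blast
  have rsA: "r ` s ` A = A" using rs AX by (force simp: image_image)
  have "y \<in> ?B" using y closure_of_subset[of "{y}" Y] by auto
  then have "r y \<in> X closure_of (r ` s ` A)"
    using continuous_map_image_closure_subset[OF r, of "s ` A"] by blast
  then have ryA: "r y \<in> A" using rsA A closure_of_closedin[of X A] by simp
  have Acl: "closedin X A" using A by blast
  have "A = X closure_of {r y}"
  proof
    have "{r y} \<subseteq> A" using ryA by blast
    from closure_of_minimal[OF this Acl] show "X closure_of {r y} \<subseteq> A" .
  next
    show "A \<subseteq> X closure_of {r y}"
    proof
      fix a assume a: "a \<in> A"
      have sA: "s ` A \<subseteq> topspace Y" using s AX unfolding continuous_map by blast
      have "s a \<in> Y closure_of (s ` A)" using closure_of_subset[OF sA] a by blast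
      then have "s a \<in> Y closure_of {y}" using y(2) by simp
      then have "r (s a) \<in> r ` (Y closure_of {y})" by blast
      also have "\<dots> \<subseteq> X closure_of (r ` {y})" by (rule continuous_map_image_closure_subset[OF r])
      finally have "r (s a) \<in> X closure_of {r y}" by simp
      then show "a \<in> X closure_of {r y}" using rs AX a by auto
    qed
  qed
  then show "\<exists>x\<in>topspace X. A = X closure_of {x}" using ryA AX by blast
qed

lemma down_Gamma: "{y. y \<le> (x::'a::complete_lattice)} \<in> Gamma_L"
  unfolding Gamma_L_def using SL_down_closed by blast

lemma gamma_s_cont: "continuous_map (Sigma_L::'a::complete_lattice topology) Sigma_Gamma (\<lambda>x. {y. y \<le> x})"
  unfolding Sigma_L_def Sigma_Gamma_def
proof (rule scott_cont)
  fix x :: 'a show "{y. y \<le> x} \<in> Gamma_L" by (rule down_Gamma)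
next
  fix x y :: 'a assume "x \<le> y" then show "{z. z \<le> x} \<subseteq> {z. z \<le> y}" by auto
next
  fix D and x :: 'a assume d: "directed_in UNIV (\<le>) D" and l: "is_lub_in UNIV (\<le>) D x"
  have x: "x = Sup D" using l lub_UNIV by blast
  show "is_lub_in Gamma_L (\<subseteq>) ((\<lambda>x. {y. y \<le> x}) ` D) {y. y \<le> x}"
    unfolding is_lub_in_def
  proof (intro conjI ballI impI)
    show "{y. y \<le> x} \<in> Gamma_L" by (rule down_Gamma)
  next
    fix B assume "B \<in> (\<lambda>x. {y. y \<le> x}) ` D"
    then show "B \<subseteq> {y. y \<le> x}" using x by (auto intro: order_trans Sup_upper)
  next
    fix C assume C: "C \<in> Gamma_L" and up: "\<forall>B\<in>(\<lambda>x. {y. y \<le> x}) ` D. B \<subseteq> C"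
    have Ccl: "closedin Sigma_L C" using C unfolding Gamma_L_def by blast
    have "D \<subseteq> C" using up by auto
    then have "Sup D \<in> C" using SL_closed_dir[OF Ccl d] by blast
    then show "{y. y \<le> x} \<subseteq> C" using SL_closed_lower[OF Ccl] x by blast
  qed
qed

lemma gamma_r_cont: "continuous_map Sigma_Gamma (Sigma_L::'a::complete_lattice topology) Sup"
  unfolding Sigma_L_def Sigma_Gamma_def
proof (rule scott_cont)
  fix B :: "'a set" show "Sup B \<in> UNIV" by simp
next
  fix B C :: "'a set" assume "B \<subseteq> C" then show "Sup B \<le> Sup C" by (rule Sup_subset_mono)
next
  fix \<D> and S :: "'a set" assume d: "directed_in Gamma_L (\<subseteq>) \<D>" and l: "is_lub_in Gamma_L (\<subseteq>) \<D> S"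
  have SG: "S \<in> Gamma_L" and up: "\<forall>B\<in>\<D>. B \<subseteq> S"
    and least: "\<forall>C\<in>Gamma_L. (\<forall>B\<in>\<D>. B \<subseteq> C) \<longrightarrow> S \<subseteq> C"
    using l unfolding is_lub_in_def by blast+
  let ?m = "Sup (Sup ` \<D>)"
  have "\<forall>B\<in>\<D>. B \<subseteq> {y. y \<le> ?m}"
  proof
    fix B assume "B \<in> \<D>"
    then have "Sup B \<le> ?m" by (simp add: SUP_upper)
    then show "B \<subseteq> {y. y \<le> ?m}" by (auto intro: order_trans Sup_upper)
  qed
  then have "S \<subseteq> {y. y \<le> ?m}" using least down_Gamma by blast
  then have "Sup S \<le> ?m" by (auto intro: Sup_least)
  moreover have "?m \<le> Sup S" using up by (simp add: SUP_least Sup_subset_mono)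
  ultimately have "Sup S = ?m" by (rule antisym)
  then show "is_lub_in UNIV (\<le>) (Sup ` \<D>) (Sup S)" using lub_UNIV by blast
qed

lemma gamma_sober: "sober_space (Sigma_Gamma::'a::complete_lattice set topology) \<Longrightarrow> sober_space (Sigma_L::'a topology)"
  by (rule retract_sober[OF gamma_s_cont gamma_r_cont _ _ SL_t0]) (simp_all add: Sup_atMost[unfolded atMost_def])

unbundle lattice_syntax


lemma sup_Sup_image:
  fixes c :: "'a::complete_lattice"
  assumes "D \<noteq> {}"
  shows "c \<squnion> Sup D = Sup ((\<lambda>d. c \<squnion> d) ` D)" (is "?l = ?r")
proof (rule antisym)
  obtain d0 where d0: "d0 \<in> D" using assms by blast
  have "c \<le> c \<squnion> d0" by simp
  also have "\<dots> \<le> ?r" using d0 by (rule SUP_upper)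
  finally have "c \<le> ?r" .
  moreover have "Sup D \<le> ?r"
  proof (rule Sup_least)
    fix x assume "x \<in> D"
    have "x \<le> c \<squnion> x" by simp
    also have "\<dots> \<le> ?r" using \<open>x \<in> D\<close> by (rule SUP_upper)
    finally show "x \<le> ?r" .
  qed
  ultimately show "?l \<le> ?r" by simp
next
  show "?r \<le> ?l" by (rule SUP_least) (simp add: Sup_upper le_supI2)
qed

lemma SL_open_upper:
  assumes "openin (Sigma_L::'a::complete_lattice topology) U" "x \<in> U" "x \<le> y"
  shows "y \<in> U"
  using assms unfolding openin_SL scott_open_def by blast

lemma SL_open_dir:
  assumes "openin (Sigma_L::'a::complete_lattice topology) U" "directed_in UNIV (\<le>) D" "Sup D \<in> U"
  shows "\<exists>d\<in>D. d \<in> U"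
proof -
  have "is_lub_in UNIV (\<le>) D (Sup D)" by (simp add: lub_UNIV)
  then show ?thesis using assms unfolding openin_SL scott_open_def by blast
qed

lemma join_open:
  assumes U: "openin (Sigma_L::'a::complete_lattice topology) U"
  shows "openin Sigma_L {y. y \<squnion> e \<in> U}"
  unfolding openin_SL scott_open_def
proof (intro conjI allI impI ballI)
  fix x y :: 'a assume "x \<in> {y. y \<squnion> e \<in> U}" "y \<in> UNIV" "x \<le> y"
  then have "x \<squnion> e \<in> U" "x \<squnion> e \<le> y \<squnion> e" by (simp, simp add: le_supI1)
  then show "y \<in> {y. y \<squnion> e \<in> U}" using SL_open_upper[OF U] by blast
next
  fix D s assume d: "directed_in UNIV (\<le>) D" and l: "is_lub_in UNIV (\<le>) D s" and s: "s \<in> {y. y \<squnion> e \<in> U}"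
  have s': "s = Sup D" using l lub_UNIV by blast
  have Dne: "D \<noteq> {}" and Dd: "\<forall>x\<in>D. \<forall>y\<in>D. \<exists>z\<in>D. x \<le> z \<and> y \<le> z" using d dir_UNIV by blast+
  have "directed_in UNIV (\<le>) ((\<lambda>d. e \<squnion> d) ` D)"
    unfolding dir_UNIV
  proof (intro conjI ballI)
    show "(\<lambda>d. e \<squnion> d) ` D \<noteq> {}" using Dne by blast
  next
    fix u v assume "u \<in> (\<lambda>d. e \<squnion> d) ` D" "v \<in> (\<lambda>d. e \<squnion> d) ` D"
    then obtain x y where xy: "x \<in> D" "y \<in> D" "u = e \<squnion> x" "v = e \<squnion> y" by blast
    then obtain z where "z \<in> D" "x \<le> z" "y \<le> z" using Dd by blast
    then show "\<exists>w\<in>(\<lambda>d. e \<squnion> d) ` D. u \<le> w \<and> v \<le> w" using xy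
      by (intro bexI[of _ "e \<squnion> z"]) (auto intro: sup_mono le_supI2)
  qed
  moreover have "Sup ((\<lambda>d. e \<squnion> d) ` D) \<in> U"
    using s s' sup_Sup_image[OF Dne, of e] by (simp add: sup_commute)
  ultimately obtain w where "w \<in> (\<lambda>d. e \<squnion> d) ` D" "w \<in> U" using SL_open_dir[OF U] by blast
  then show "D \<inter> {y. y \<squnion> e \<in> U} \<noteq> {}" by (auto simp: sup_commute)
qed simp

lemma dir_ub:
  assumes "finite F" "F \<subseteq> D" "D \<noteq> {}" "\<forall>x\<in>D. \<forall>y\<in>D. \<exists>z\<in>D. x \<le> z \<and> y \<le> z"
  shows "\<exists>d0\<in>D. \<forall>d\<in>F. d \<le> (d0::'a::order)"
  using assms(1,2)
proof (induction F rule: finite_induct)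
  case empty then show ?case using assms(3) by blast
next
  case (insert x F)
  then obtain d0 where d0: "d0 \<in> D" "\<forall>d\<in>F. d \<le> d0" by blast
  obtain z where z: "z \<in> D" "x \<le> z" "d0 \<le> z" using assms(4) d0 insert by blast
  show ?case
  proof (intro bexI[of _ z] ballI)
    fix d assume "d \<in> insert x F"
    then show "d \<le> z" using z d0 by (metis insert_iff order_trans)
  qed (use z in blast)
qed

lemma Vs_open:
  assumes S: "compactin (Sigma_L::'a::complete_lattice topology) S" and U: "openin Sigma_L U"
  shows "openin Sigma_L {z. \<forall>y\<in>S. y \<squnion> z \<in> U}"
  unfolding openin_SL scott_open_def
proof (intro conjI allI impI ballI)
  fix x z :: 'a assume "x \<in> {z. \<forall>y\<in>S. y \<squnion> z \<in> U}" "z \<in> UNIV" "x \<le> z"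
  then have "\<forall>y\<in>S. y \<squnion> x \<in> U" "\<forall>y. y \<squnion> x \<le> y \<squnion> z" by (simp, simp add: le_supI2)
  then show "z \<in> {z. \<forall>y\<in>S. y \<squnion> z \<in> U}" using SL_open_upper[OF U] by blast
next
  fix D s assume d: "directed_in UNIV (\<le>) D" and l: "is_lub_in UNIV (\<le>) D s" and s: "s \<in> {z. \<forall>y\<in>S. y \<squnion> z \<in> U}"
  have s': "s = Sup D" using l lub_UNIV by blast
  have Dne: "D \<noteq> {}" and Dd: "\<forall>x\<in>D. \<forall>y\<in>D. \<exists>z\<in>D. x \<le> z \<and> y \<le> z" using d dir_UNIV by blast+
  have cov: "S \<subseteq> \<Union> ((\<lambda>d. {y. y \<squnion> d \<in> U}) ` D)"
  proof
    fix y assume y: "y \<in> S"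
    have "openin Sigma_L {x. x \<squnion> y \<in> U}" by (rule join_open[OF U])
    moreover have "Sup D \<in> {x. x \<squnion> y \<in> U}" using s s' y by (simp add: sup_commute)
    ultimately obtain d where "d \<in> D" "d \<squnion> y \<in> U" using SL_open_dir[OF _ d] by blast
    then show "y \<in> \<Union> ((\<lambda>d. {y. y \<squnion> d \<in> U}) ` D)" by (auto simp: sup_commute)
  qed
  have opn: "\<forall>V\<in>(\<lambda>d. {y. y \<squnion> d \<in> U}) ` D. openin Sigma_L V" using join_open[OF U] by blast
  obtain \<F> where F: "finite \<F>" "\<F> \<subseteq> (\<lambda>d. {y. y \<squnion> d \<in> U}) ` D" "S \<subseteq> \<Union>\<F>"
    using S opn cov unfolding compactin_def by meson
  then obtain F' where F': "F' \<subseteq> D" "finite F'" "\<F> = (\<lambda>d. {y. y \<squnion> d \<in> U}) ` F'"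
    by (meson finite_subset_image)
  obtain d0 where d0: "d0 \<in> D" "\<forall>d\<in>F'. d \<le> d0" using dir_ub[OF F'(2) F'(1) Dne Dd] by blast
  have "\<forall>y\<in>S. y \<squnion> d0 \<in> U"
  proof
    fix y assume "y \<in> S"
    then obtain d where "d \<in> F'" "y \<squnion> d \<in> U" using F(3) F'(3) by blast
    moreover have "y \<squnion> d \<le> y \<squnion> d0" using d0 \<open>d \<in> F'\<close> by (auto intro: sup_mono le_supI2)
    ultimately show "y \<squnion> d0 \<in> U" using SL_open_upper[OF U] by blast
  qed
  then show "D \<inter> {z. \<forall>y\<in>S. y \<squnion> z \<in> U} \<noteq> {}" using d0 by blast
qed simp

lemma fin_chain_max:
  assumes "finite F" "F \<noteq> {}" "\<forall>A\<in>F. \<forall>B\<in>F. A \<subseteq> B \<or> B \<subseteq> A"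
  shows "\<exists>M\<in>F. \<forall>A\<in>F. A \<subseteq> M"
  using assms
proof (induction F rule: finite_ne_induct)
  case (singleton x) then show ?case by blast
next
  case (insert x F)
  have chF: "\<forall>A\<in>F. \<forall>B\<in>F. A \<subseteq> B \<or> B \<subseteq> A" using insert.prems by blast
  obtain M where M: "M \<in> F" "\<forall>A\<in>F. A \<subseteq> M" using insert.IH[OF chF] by blast
  have "x \<subseteq> M \<or> M \<subseteq> x" using insert.prems M(1) by blast
  then show ?case
  proof
    assume "x \<subseteq> M" then show ?case using M by blast
  next
    assume "M \<subseteq> x" then show ?case using M by blast
  qed
qed


lemma wf_SL:
  fixes \<K> :: "'a::complete_lattice set set" and U :: "'a set"
  assumes ne: "\<K> \<noteq> {}"
    and cpt: "\<And>K. K \<in> \<K> \<Longrightarrow> compactin Sigma_L K"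
    and upK: "\<And>K x y. K \<in> \<K> \<Longrightarrow> x \<in> K \<Longrightarrow> x \<le> y \<Longrightarrow> y \<in> K"
    and filt: "\<And>K1 K2. K1 \<in> \<K> \<Longrightarrow> K2 \<in> \<K> \<Longrightarrow> \<exists>K3\<in>\<K>. K3 \<subseteq> K1 \<inter> K2"
    and U: "openin Sigma_L U" and sub: "\<Inter>\<K> \<subseteq> U"
  shows "\<exists>K\<in>\<K>. K \<subseteq> U"
proof (rule ccontr)
  assume "\<not> ?thesis"
  then have meet: "\<And>K. K \<in> \<K> \<Longrightarrow> \<not> K \<subseteq> U" by blast
  define \<O> where "\<O> = {Om. openin (Sigma_L::'a topology) Om \<and> U \<subseteq> Om \<and> (\<forall>K\<in>\<K>. \<not> K \<subseteq> Om)}"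
  have UO: "U \<in> \<O>" using U meet unfolding \<O>_def by blast
  have "\<forall>C\<in>chains \<O>. \<exists>V\<in>\<O>. \<forall>X\<in>C. X \<subseteq> V"
  proof
    fix C assume C: "C \<in> chains \<O>"
    then have CO: "C \<subseteq> \<O>" and ch: "\<forall>A\<in>C. \<forall>B\<in>C. A \<subseteq> B \<or> B \<subseteq> A"
      unfolding chains_def chain_subset_def by blast+
    show "\<exists>V\<in>\<O>. \<forall>X\<in>C. X \<subseteq> V"
    proof (cases "C = {}")
      case True then show ?thesis using UO by blast
    next
      case False
      then obtain X0 where X0: "X0 \<in> C" by blast
      have op: "\<forall>X\<in>C. openin Sigma_L X" using CO unfolding \<O>_def by blast
      have "\<Union>C \<in> \<O>"
        unfolding \<O>_def
      proof (intro CollectI conjI ballI)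
        show "openin Sigma_L (\<Union>C)" by (rule openin_Union) (use op in blast)
        show "U \<subseteq> \<Union>C" using X0 CO unfolding \<O>_def by blast
      next
        fix K assume K: "K \<in> \<K>"
        show "\<not> K \<subseteq> \<Union>C"
        proof
          assume KC: "K \<subseteq> \<Union>C"
          obtain \<F> where F: "finite \<F>" "\<F> \<subseteq> C" "K \<subseteq> \<Union>\<F>"
            using cpt[OF K] op KC unfolding compactin_def by meson
          have "K \<noteq> {}" using meet[OF K] by blast
          then have "\<F> \<noteq> {}" using F by blast
          then obtain M where M: "M \<in> \<F>" "\<forall>A\<in>\<F>. A \<subseteq> M"
            using fin_chain_max[OF F(1)] ch F(2) by (meson subsetD)
          have "K \<subseteq> M" using F(3) M by blast
          moreover have "M \<in> \<O>" using M F CO by blast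
          ultimately show False using K unfolding \<O>_def by blast
        qed
      qed
      then show ?thesis by blast
    qed
  qed
  from Zorn_Lemma2[OF this] obtain Om where Om: "Om \<in> \<O>" and maxO: "\<forall>X\<in>\<O>. Om \<subseteq> X \<longrightarrow> X = Om"
    by blast
  define A where "A = - Om"
  have Oopen: "openin Sigma_L Om" and UsubO: "U \<subseteq> Om" and KO: "\<forall>K\<in>\<K>. \<not> K \<subseteq> Om"
    using Om unfolding \<O>_def by blast+
  have Acl: "closedin Sigma_L A" unfolding A_def closedin_SL using Oopen unfolding openin_SL by simp
  have AU: "\<And>y. y \<in> A \<Longrightarrow> y \<notin> U" using UsubO unfolding A_def by blast
  have Ameet: "\<And>K. K \<in> \<K> \<Longrightarrow> K \<inter> A \<noteq> {}" using KO unfolding A_def by blast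
  have minA: "B = A" if B: "closedin Sigma_L B" "B \<subseteq> A" "\<forall>K\<in>\<K>. K \<inter> B \<noteq> {}" for B
  proof -
    have "openin Sigma_L (- B)" using B(1) unfolding closedin_SL openin_SL .
    moreover have "U \<subseteq> - B" using B(2) AU by blast
    moreover have "\<forall>K\<in>\<K>. \<not> K \<subseteq> - B" using B(3) by blast
    ultimately have "- B \<in> \<O>" unfolding \<O>_def by blast
    moreover have "Om \<subseteq> - B" using B(2) unfolding A_def by blast
    ultimately have "- B = Om" using maxO by blast
    then show "B = A" unfolding A_def by blast
  qed
  have cptKA: "compactin Sigma_L (K \<inter> A)" if "K \<in> \<K>" for K
    using closed_Int_compactin[OF Acl cpt[OF that]] by (simp add: Int_commute)
  define P where "P c \<longleftrightarrow> (\<exists>K\<in>\<K>. \<forall>y\<in>K \<inter> A. y \<squnion> c \<in> U)" for c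
  define G where "G = {c. \<not> P c}"
  have P_mono: "P c'" if "P c" "c \<le> c'" for c c'
  proof -
    obtain K where K: "K \<in> \<K>" "\<forall>y\<in>K \<inter> A. y \<squnion> c \<in> U" using \<open>P c\<close> unfolding P_def by blast
    have "\<forall>y\<in>K \<inter> A. y \<squnion> c' \<in> U"
    proof
      fix y assume "y \<in> K \<inter> A"
      then have "y \<squnion> c \<in> U" using K by blast
      moreover have "y \<squnion> c \<le> y \<squnion> c'" using \<open>c \<le> c'\<close> by (simp add: le_supI2)
      ultimately show "y \<squnion> c' \<in> U" using SL_open_upper[OF U] by blast
    qed
    then show ?thesis using K unfolding P_def by blast
  qed
  have G_lower: "c' \<in> G" if "c \<in> G" "c' \<le> c" for c c'
    using that P_mono unfolding G_def by blast
  have G_dir: "Sup D \<in> G" if D: "D \<subseteq> G" "directed_in UNIV (\<le>) D" for D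
  proof -
    have "\<not> P (Sup D)"
    proof
      assume "P (Sup D)"
      then obtain K where K: "K \<in> \<K>" "\<forall>y\<in>K \<inter> A. y \<squnion> Sup D \<in> U" unfolding P_def by blast
      have "openin Sigma_L {z. \<forall>y\<in>K \<inter> A. y \<squnion> z \<in> U}" by (rule Vs_open[OF cptKA[OF K(1)] U])
      moreover have "Sup D \<in> {z. \<forall>y\<in>K \<inter> A. y \<squnion> z \<in> U}" using K by blast
      ultimately obtain d where d: "d \<in> D" "d \<in> {z. \<forall>y\<in>K \<inter> A. y \<squnion> z \<in> U}"
        using SL_open_dir[OF _ D(2)] by blast
      then have "P d" using K unfolding P_def by blast
      then show False using d D(1) unfolding G_def by blast
    qed
    then show ?thesis unfolding G_def by blast
  qed
  have G_bot: "\<bottom> \<in> G"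
  proof -
    have "\<not> P \<bottom>"
    proof
      assume "P \<bottom>"
      then obtain K where K: "K \<in> \<K>" "\<forall>y\<in>K \<inter> A. y \<squnion> \<bottom> \<in> U" unfolding P_def by blast
      obtain y where "y \<in> K \<inter> A" using Ameet[OF K(1)] by blast
      then show False using K AU by auto
    qed
    then show ?thesis unfolding G_def by blast
  qed
  have G_step: "c \<squnion> a \<in> G" if c: "c \<in> G" and a: "a \<in> A" for c a
  proof -
    have opc: "openin Sigma_L {y. y \<squnion> c \<in> U}" by (rule join_open[OF U])
    have all: "\<forall>y\<in>A. y \<squnion> c \<notin> U"
    proof -
      let ?B = "A \<inter> - {y. y \<squnion> c \<in> U}"
      have "closedin Sigma_L (- {y. y \<squnion> c \<in> U})" using opc unfolding closedin_SL openin_SL by simp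
      then have Bcl: "closedin Sigma_L ?B" using Acl by (intro closedin_Int)
      have "\<forall>K\<in>\<K>. K \<inter> ?B \<noteq> {}"
      proof
        fix K assume K: "K \<in> \<K>"
        have "\<not> (\<forall>y\<in>K \<inter> A. y \<squnion> c \<in> U)" using c K unfolding G_def P_def by blast
        then show "K \<inter> ?B \<noteq> {}" by blast
      qed
      then have "?B = A" using minA[OF Bcl] by blast
      then show ?thesis by blast
    qed
    have "\<not> P (c \<squnion> a)"
    proof
      assume "P (c \<squnion> a)"
      then obtain K where K: "K \<in> \<K>" "\<forall>y\<in>K \<inter> A. y \<squnion> (c \<squnion> a) \<in> U" unfolding P_def by blast
      let ?W = "{z. \<forall>y\<in>K \<inter> A. y \<squnion> z \<in> U}"
      let ?V = "{z. z \<squnion> c \<in> ?W}"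
      have Wo: "openin Sigma_L ?W" by (rule Vs_open[OF cptKA[OF K(1)] U])
      have Vo: "openin Sigma_L ?V" by (rule join_open[OF Wo])
      have aV: "a \<in> ?V" using K(2) by (simp add: sup_commute sup_left_commute)
      let ?B = "A \<inter> - ?V"
      have "closedin Sigma_L (- ?V)" using Vo unfolding closedin_SL openin_SL by simp
      then have Bcl: "closedin Sigma_L ?B" using Acl by (intro closedin_Int)
      have "?B \<noteq> A" using a aV by blast
      then have "\<not> (\<forall>K\<in>\<K>. K \<inter> ?B \<noteq> {})" using minA[OF Bcl] by blast
      then obtain K' where K': "K' \<in> \<K>" "K' \<inter> ?B = {}" by blast
      obtain K'' where K'': "K'' \<in> \<K>" "K'' \<subseteq> K \<inter> K'" using filt[OF K(1) K'(1)] by blast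
      obtain y where y: "y \<in> K'' \<inter> A" using Ameet[OF K''(1)] by blast
      have "y \<in> ?V" using y K'' K' by blast
      then have "y \<squnion> (y \<squnion> c) \<in> U" using y K'' by blast
      then have "y \<squnion> c \<in> U" by (simp add: sup_assoc[symmetric])
      then show False using all y by blast
    qed
    then show ?thesis unfolding G_def by blast
  qed
  define H where "H = {a. \<forall>c\<in>G. c \<squnion> a \<in> G}"
  have H_bot: "\<bottom> \<in> H" unfolding H_def by simp
  have A_H: "A \<subseteq> H" unfolding H_def using G_step by blast
  have H_lower: "a' \<in> H" if "a \<in> H" "a' \<le> a" for a a'
    unfolding H_def
  proof (intro CollectI ballI)
    fix c assume "c \<in> G"
    then have "c \<squnion> a \<in> G" using that unfolding H_def by blast
    moreover have "c \<squnion> a' \<le> c \<squnion> a" using that(2) by (simp add: le_supI2)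
    ultimately show "c \<squnion> a' \<in> G" by (rule G_lower)
  qed
  have H_join: "a1 \<squnion> a2 \<in> H" if "a1 \<in> H" "a2 \<in> H" for a1 a2
    unfolding H_def
  proof (intro CollectI ballI)
    fix c assume "c \<in> G"
    then have "c \<squnion> a1 \<in> G" using that unfolding H_def by blast
    then have "(c \<squnion> a1) \<squnion> a2 \<in> G" using that unfolding H_def by blast
    then show "c \<squnion> (a1 \<squnion> a2) \<in> G" by (simp add: sup_assoc)
  qed
  have H_dir: "Sup D \<in> H" if D: "D \<subseteq> H" "directed_in UNIV (\<le>) D" for D
    unfolding H_def
  proof (intro CollectI ballI)
    fix c assume c: "c \<in> G"
    have Dne: "D \<noteq> {}" and Dd: "\<forall>x\<in>D. \<forall>y\<in>D. \<exists>z\<in>D. x \<le> z \<and> y \<le> z" using D(2) dir_UNIV by blast+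
    have "directed_in UNIV (\<le>) ((\<lambda>d. c \<squnion> d) ` D)"
      unfolding dir_UNIV
    proof (intro conjI ballI)
      show "(\<lambda>d. c \<squnion> d) ` D \<noteq> {}" using Dne by blast
    next
      fix u v assume "u \<in> (\<lambda>d. c \<squnion> d) ` D" "v \<in> (\<lambda>d. c \<squnion> d) ` D"
      then obtain x y where xy: "x \<in> D" "y \<in> D" "u = c \<squnion> x" "v = c \<squnion> y" by blast
      then obtain z where z: "z \<in> D" "x \<le> z" "y \<le> z" using Dd by blast
      have "u \<le> c \<squnion> z" "v \<le> c \<squnion> z" using xy z by (simp_all add: le_supI2)
      then show "\<exists>w\<in>(\<lambda>d. c \<squnion> d) ` D. u \<le> w \<and> v \<le> w" using z by blast
    qed
    moreover have "(\<lambda>d. c \<squnion> d) ` D \<subseteq> G" using D(1) c unfolding H_def by blast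
    ultimately have "Sup ((\<lambda>d. c \<squnion> d) ` D) \<in> G" using G_dir by blast
    then show "c \<squnion> Sup D \<in> G" using sup_Sup_image[OF Dne, of c] by simp
  qed
  have "directed_in UNIV (\<le>) H"
    unfolding dir_UNIV using H_bot H_join by (blast intro: sup_ge1 sup_ge2)
  then have "Sup H \<in> H" using H_dir by blast
  moreover have "Sup A \<le> Sup H" using A_H by (rule Sup_subset_mono)
  ultimately have bH: "Sup A \<in> H" using H_lower by blast
  then have "\<bottom> \<squnion> Sup A \<in> G" using G_bot unfolding H_def by blast
  then have nPb: "\<not> P (Sup A)" unfolding G_def by simp
  have bK: "Sup A \<in> K" if K: "K \<in> \<K>" for K
  proof -
    obtain y where "y \<in> K" "y \<in> A" using Ameet[OF K] by blast
    then show ?thesis using upK[OF K] Sup_upper by blast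
  qed
  then have "Sup A \<in> U" using sub ne by blast
  obtain K0 where K0: "K0 \<in> \<K>" using ne by blast
  have "\<forall>y\<in>K0 \<inter> A. y \<squnion> Sup A \<in> U"
  proof
    fix y assume "y \<in> K0 \<inter> A"
    then have "y \<squnion> Sup A = Sup A" by (simp add: Sup_upper sup_absorb2)
    then show "y \<squnion> Sup A \<in> U" using \<open>Sup A \<in> U\<close> by simp
  qed
  then have "P (Sup A)" using K0 unfolding P_def by blast
  then show False using nPb by blast
qed

lemma up_Q: "{y. (x::'a::complete_lattice) \<le> y} \<in> Q_L"
proof -
  have c: "compactin Sigma_L {y. x \<le> y}"
    unfolding compactin_def topspace_SL
  proof (intro conjI allI impI)
    fix \<U> assume h: "(\<forall>U\<in>\<U>. openin Sigma_L U) \<and> {y. x \<le> y} \<subseteq> \<Union>\<U>"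
    then obtain V where V: "V \<in> \<U>" "x \<in> V" by blast
    have Vo: "openin Sigma_L V" using h V by blast
    have "{y. x \<le> y} \<subseteq> V" using SL_open_upper[OF Vo V(2)] by blast
    then show "\<exists>\<F>. finite \<F> \<and> \<F> \<subseteq> \<U> \<and> {y. x \<le> y} \<subseteq> \<Union>\<F>" using V
      by (intro exI[of _ "{V}"]) auto
  qed simp
  have u: "\<forall>u\<in>{y. x \<le> y}. \<forall>v. u \<le> v \<longrightarrow> v \<in> {y. x \<le> y}"
  proof (intro ballI allI impI)
    fix u v assume "u \<in> {y. x \<le> y}" "u \<le> v"
    then show "v \<in> {y. x \<le> y}" using order_trans[of x u v] by simp
  qed
  have n: "{y. x \<le> y} \<noteq> {}" using order_refl[of x] by blast
  show ?thesis unfolding Q_L_def using c u n by blast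
qed

lemma q_s_cont: "continuous_map (Sigma_L::'a::complete_lattice topology) Sigma_Q (\<lambda>x. {y. x \<le> y})"
  unfolding Sigma_L_def Sigma_Q_def
proof (rule scott_cont)
  fix x :: 'a show "{y. x \<le> y} \<in> Q_L" by (rule up_Q)
next
  fix x y :: 'a assume "x \<le> y" then show "{z. y \<le> z} \<subseteq> {z. x \<le> z}" using order_trans by blast
next
  fix D and x :: 'a assume d: "directed_in UNIV (\<le>) D" and l: "is_lub_in UNIV (\<le>) D x"
  have x: "x = Sup D" using l lub_UNIV by blast
  show "is_lub_in Q_L (\<lambda>A B. B \<subseteq> A) ((\<lambda>x. {y. x \<le> y}) ` D) {y. x \<le> y}"
    unfolding is_lub_in_def
  proof (intro conjI ballI impI)
    show "{y. x \<le> y} \<in> Q_L" by (rule up_Q)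
  next
    fix B assume "B \<in> (\<lambda>x. {y. x \<le> y}) ` D"
    then obtain d where d: "d \<in> D" "B = {y. d \<le> y}" by blast
    have "d \<le> x" using x d(1) by (simp add: Sup_upper)
    then show "{y. x \<le> y} \<subseteq> B" using d(2) order_trans by blast
  next
    fix u assume u: "u \<in> Q_L" and up: "\<forall>B\<in>(\<lambda>x. {y. x \<le> y}) ` D. u \<subseteq> B"
    show "u \<subseteq> {y. x \<le> y}"
    proof
      fix z assume "z \<in> u"
      then have "\<forall>d\<in>D. d \<le> z" using up by blast
      then show "z \<in> {y. x \<le> y}" using x by (simp add: Sup_least)
    qed
  qed
qed

lemma Q_box_open:
  assumes A: "closedin (Sigma_L::'a::complete_lattice topology) A"
  shows "openin Sigma_Q {K \<in> Q_L. K \<subseteq> - A}"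
  unfolding Sigma_Q_def openin_scott scott_open_def
proof (intro conjI allI impI ballI)
  show "{K \<in> Q_L. K \<subseteq> - A} \<subseteq> Q_L" by blast
next
  fix K K' :: "'a set" assume "K \<in> {K \<in> Q_L. K \<subseteq> - A}" "K' \<in> Q_L" "K' \<subseteq> K"
  then show "K' \<in> {K \<in> Q_L. K \<subseteq> - A}" by blast
next
  fix \<D> S assume d: "directed_in Q_L (\<lambda>A B. B \<subseteq> A) \<D>" and l: "is_lub_in Q_L (\<lambda>A B. B \<subseteq> A) \<D> S"
    and S: "S \<in> {K \<in> Q_L. K \<subseteq> - A}"
  have DQ: "\<D> \<subseteq> Q_L" and Dne: "\<D> \<noteq> {}" and filt: "\<forall>K1\<in>\<D>. \<forall>K2\<in>\<D>. \<exists>K3\<in>\<D>. K3 \<subseteq> K1 \<and> K3 \<subseteq> K2"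
    using d unfolding directed_in_def by blast+
  have least: "\<forall>u\<in>Q_L. (\<forall>K\<in>\<D>. u \<subseteq> K) \<longrightarrow> u \<subseteq> S" using l unfolding is_lub_in_def by blast
  have upD: "\<And>K x y. K \<in> \<D> \<Longrightarrow> x \<in> K \<Longrightarrow> x \<le> y \<Longrightarrow> y \<in> K"
    using DQ unfolding Q_L_def by blast
  have cptD: "\<And>K. K \<in> \<D> \<Longrightarrow> compactin Sigma_L K" using DQ unfolding Q_L_def by blast
  have "\<Inter>\<D> \<subseteq> S"
  proof
    fix z assume z: "z \<in> \<Inter>\<D>"
    have "\<forall>K\<in>\<D>. {y. z \<le> y} \<subseteq> K" using z upD by blast
    then have "{y. z \<le> y} \<subseteq> S" using least up_Q by blast
    then show "z \<in> S" by blast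
  qed
  then have sub: "\<Inter>\<D> \<subseteq> - A" using S by blast
  have Uo: "openin Sigma_L (- A)" using A unfolding closedin_SL openin_SL .
  have filt': "\<And>K1 K2. K1 \<in> \<D> \<Longrightarrow> K2 \<in> \<D> \<Longrightarrow> \<exists>K3\<in>\<D>. K3 \<subseteq> K1 \<inter> K2"
  proof -
    fix K1 K2 assume "K1 \<in> \<D>" "K2 \<in> \<D>"
    then obtain K3 where "K3 \<in> \<D>" "K3 \<subseteq> K1" "K3 \<subseteq> K2" using filt by blast
    then show "\<exists>K3\<in>\<D>. K3 \<subseteq> K1 \<inter> K2" by blast
  qed
  have "\<exists>K\<in>\<D>. K \<subseteq> - A"
    by (rule wf_SL[where \<K>=\<D> and U="- A"]) (fact Dne, fact cptD, fact upD, fact filt', fact Uo, fact sub)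
  then obtain K where K: "K \<in> \<D>" "K \<subseteq> - A" by blast
  then show "\<D> \<inter> {K \<in> Q_L. K \<subseteq> - A} \<noteq> {}" using DQ by blast
qed

lemma Q_closure_point:
  assumes "K0 \<in> Q_L"
  shows "(Sigma_Q::'a::complete_lattice set topology) closure_of {K0} = {K \<in> Q_L. K0 \<subseteq> K}"
proof -
  have "scott_topology Q_L (\<lambda>A B. B \<subseteq> A) closure_of {K0} = {y \<in> Q_L. (\<lambda>A B. B \<subseteq> A) y K0}"
    by (rule closure_point_scott) (use assms in blast)+
  then show ?thesis unfolding Sigma_Q_def by simp
qed

lemma topspace_Q: "topspace (Sigma_Q::'a::complete_lattice set topology) = Q_L"
  unfolding Sigma_Q_def by (rule topspace_scott)

lemma q_sober:
  assumes sob: "sober_space (Sigma_Q::'a::complete_lattice set topology)"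
  shows "sober_space (Sigma_L::'a topology)"
  unfolding sober_space_def
proof (intro conjI allI impI SL_t0)
  fix A :: "'a set" assume A: "closedin Sigma_L A \<and> irreducible_in Sigma_L A"
  have Acl: "closedin Sigma_L A" using A by blast
  let ?b = "Sup A"
  show "\<exists>x\<in>topspace Sigma_L. A = Sigma_L closure_of {x}"
  proof (cases "?b \<in> A")
    case True
    have "A = {y. y \<le> ?b}"
      using SL_closed_lower[OF Acl True] by (auto intro: Sup_upper)
    then show ?thesis using SL_closure_point[of ?b] topspace_SL by blast
  next
    case False
    let ?s = "\<lambda>x::'a. {y. x \<le> y}"
    let ?B = "Sigma_Q closure_of (?s ` A)"
    have "irreducible_in Sigma_Q ?B" using irreducible_closure_image[OF q_s_cont] A by blast
    moreover have "closedin Sigma_Q ?B" by simp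
    ultimately obtain K0 where K0: "K0 \<in> Q_L" "?B = Sigma_Q closure_of {K0}"
      using sob topspace_Q unfolding sober_space_def by blast
    then have B: "?B = {K \<in> Q_L. K0 \<subseteq> K}" using Q_closure_point by simp
    have sA: "?s ` A \<subseteq> topspace Sigma_Q" using up_Q topspace_Q by blast
    have sub1: "?s ` A \<subseteq> ?B" by (rule closure_of_subset[OF sA])
    have K0A: "K0 \<subseteq> - A"
    proof
      fix z assume z: "z \<in> K0"
      have "\<forall>a\<in>A. a \<le> z"
      proof
        fix a assume "a \<in> A"
        then have "?s a \<in> ?B" using sub1 by blast
        then show "a \<le> z" using B z by blast
      qed
      then have "?b \<le> z" by (simp add: Sup_least)
      then show "z \<in> - A" using SL_closed_lower[OF Acl, of z ?b] False by blast
    qed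
    have K0B: "K0 \<in> ?B" using B K0(1) by blast
    have op: "openin Sigma_Q {K \<in> Q_L. K \<subseteq> - A}" by (rule Q_box_open[OF Acl])
    have "{K \<in> Q_L. K \<subseteq> - A} \<inter> ?B \<noteq> {}" using K0A K0B K0(1) by blast
    then have "{K \<in> Q_L. K \<subseteq> - A} \<inter> ?s ` A \<noteq> {}"
      using openin_Int_closure_of_eq_empty[OF op] by blast
    then obtain a where "a \<in> A" "?s a \<subseteq> - A" by blast
    then show ?thesis by auto
  qed
qed

theorem corollary4p14:
  assumes "countable (UNIV :: 'a::complete_lattice set)"
    and "\<not> sober_space (Sigma_L :: 'a topology)"
  shows "\<not> sober_space (Sigma_Gamma :: 'a set topology) \<and> \<not> sober_space (Sigma_Q :: 'a set topology)"
  using assms(2) gamma_sober q_sober by blast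

end
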